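(* Let $P=(P;\tau,\le,\zeta)$ be a $pm$-space of height at most $1$ and let $X\subseteq P$ be a clopen decreasing set, regarded as an element of the dual algebra $E(P)$. Then for every $n<\omega$, $$X^{n(\prime\ast)}=\{x\in P:\ \ell(x,P\setminus X)>n\}\ \text{ if $n$ is even},\qquad X^{n(\prime\ast)}=\{x\in P:\ \ell(x,\zeta(P\setminus X))>n\}\ \text{ if $n$ is odd}.$$ Moreover, for $x\in P$, $\ell(x,P\setminus X)$ is infinite if and only if $Q_x\subseteq X$, and $\ell(x,\zeta(P\setminus X))$ is infinite if and only if $\zeta(Q_x)\subseteq X$.
   Context: A $pm$-space is $(P;\tau,\le,\zeta)$ where $(P;\tau,\le)$ is a Priestley space, $[X)$ is clopen for every clopen decreasing $X$, and $\zeta$ is a continuous order-reversing involution. Its dual algebra $E(P)$ consists of the clopen decreasing subsets of $P$ with $\cap,\cup,\emptyset,P$, $X^\ast=P\setminus[X)$ and $X'=P\setminus\zeta(X)$. For an element $x$ of a $pm$-algebra, $x^{0(\prime\ast)}=x$ and $x^{(k+1)(\prime\ast)}=((x^{k(\prime\ast)})')^\ast$. For $x,y\in P$, $\ell(x,y)$ is $0$ if $x=y$, otherwise the length of a shortest path from $x$ to $y$ in the comparability graph of $(P;\le)$ (vertices $P$, edges between distinct comparable elements), and $\ell(x,y)=\infty$ if there is no such path; $\infty>n$ for all $n<\omega$. For $A\subseteq P$, $\ell(x,A)=\min\{\ell(x,y):y\in A\}$ if $A\neq\emptyset$ and $\ell(x,\emptyset)=\infty$. An order component is a maximal subset of $P$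 in which all distances are finite; $Q_x$ is the order component containing $x$. *)

theory Defs
  imports "HOL-Analysis.Analysis" "HOL-Library.Extended_Nat"
begin

definition partial_order_on_set :: "'a set \<Rightarrow> ('a \<Rightarrow> 'a \<Rightarrow> bool) \<Rightarrow> bool" where
  "partial_order_on_set P le \<longleftrightarrow>
     (\<forall>x\<in>P. le x x) \<and>
     (\<forall>x\<in>P. \<forall>y\<in>P. le x y \<and> le y x \<longrightarrow> x = y) \<and>
     (\<forall>x\<in>P. \<forall>y\<in>P. \<forall>z\<in>P. le x y \<and> le y z \<longrightarrow> le x z)"

definition clopenin :: "'a topology \<Rightarrow> 'a set \<Rightarrow> bool" where
  "clopenin T U \<longleftrightarrow> openin T U \<and> closedin T U"

definition decreasing :: "'a set \<Rightarrow> ('a \<Rightarrow> 'a \<Rightarrow> bool) \<Rightarrow> 'a set \<Rightarrow> bool" where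
  "decreasing P le U \<longleftrightarrow> U \<subseteq> P \<and> (\<forall>x\<in>U. \<forall>y\<in>P. le y x \<longrightarrow> y \<in> U)"

definition increasing :: "'a set \<Rightarrow> ('a \<Rightarrow> 'a \<Rightarrow> bool) \<Rightarrow> 'a set \<Rightarrow> bool" where
  "increasing P le U \<longleftrightarrow> U \<subseteq> P \<and> (\<forall>x\<in>U. \<forall>y\<in>P. le x y \<longrightarrow> y \<in> U)"

definition upset :: "'a set \<Rightarrow> ('a \<Rightarrow> 'a \<Rightarrow> bool) \<Rightarrow> 'a set \<Rightarrow> 'a set" where
  "upset P le X = {y\<in>P. \<exists>x\<in>X. le x y}"

definition priestley_space :: "'a topology \<Rightarrow> ('a \<Rightarrow> 'a \<Rightarrow> bool) \<Rightarrow> bool" where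
  "priestley_space T le \<longleftrightarrow>
     compact_space T \<and> partial_order_on_set (topspace T) le \<and>
     (\<forall>x\<in>topspace T. \<forall>y\<in>topspace T. \<not> le x y \<longrightarrow>
        (\<exists>U. clopenin T U \<and> increasing (topspace T) le U \<and> x \<in> U \<and> y \<notin> U))"

definition pm_space :: "'a topology \<Rightarrow> ('a \<Rightarrow> 'a \<Rightarrow> bool) \<Rightarrow> ('a \<Rightarrow> 'a) \<Rightarrow> bool" where
  "pm_space T le zeta \<longleftrightarrow>
     priestley_space T le \<and>
     (\<forall>X. clopenin T X \<and> decreasing (topspace T) le X \<longrightarrow> clopenin T (upset (topspace T) le X)) \<and>
     continuous_map T T zeta \<and>
     (\<forall>x\<in>topspace T. \<forall>y\<in>topspace T. le x y \<longrightarrow> le (zeta y) (zeta x)) \<and>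
     (\<forall>x\<in>topspace T. zeta (zeta x) = x)"

definition height_le_1 :: "'a set \<Rightarrow> ('a \<Rightarrow> 'a \<Rightarrow> bool) \<Rightarrow> bool" where
  "height_le_1 P le \<longleftrightarrow>
     \<not> (\<exists>x\<in>P. \<exists>y\<in>P. \<exists>z\<in>P. le x y \<and> x \<noteq> y \<and> le y z \<and> y \<noteq> z)"

definition pstar :: "'a set \<Rightarrow> ('a \<Rightarrow> 'a \<Rightarrow> bool) \<Rightarrow> 'a set \<Rightarrow> 'a set" where
  "pstar P le X = P - upset P le X"

definition pprime :: "'a set \<Rightarrow> ('a \<Rightarrow> 'a) \<Rightarrow> 'a set \<Rightarrow> 'a set" where
  "pprime P zeta X = P - zeta ` X"

fun prime_star_iter :: "'a set \<Rightarrow> ('a \<Rightarrow> 'a \<Rightarrow> bool) \<Rightarrow> ('a \<Rightarrow> 'a) \<Rightarrow> nat \<Rightarrow> 'a set \<Rightarrow> 'a set" where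
  "prime_star_iter P le zeta 0 X = X"
| "prime_star_iter P le zeta (Suc k) X = pstar P le (pprime P zeta (prime_star_iter P le zeta k X))"

definition comparable_edge :: "('a \<Rightarrow> 'a \<Rightarrow> bool) \<Rightarrow> 'a \<Rightarrow> 'a \<Rightarrow> bool" where
  "comparable_edge le a b \<longleftrightarrow> a \<noteq> b \<and> (le a b \<or> le b a)"

definition comp_path :: "'a set \<Rightarrow> ('a \<Rightarrow> 'a \<Rightarrow> bool) \<Rightarrow> nat \<Rightarrow> 'a \<Rightarrow> 'a \<Rightarrow> bool" where
  "comp_path P le k x y \<longleftrightarrow>
     (\<exists>f :: nat \<Rightarrow> 'a. f 0 = x \<and> f k = y \<and> (\<forall>i\<le>k. f i \<in> P) \<and>
        (\<forall>i<k. comparable_edge le (f i) (f (Suc i))))"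

definition odist :: "'a set \<Rightarrow> ('a \<Rightarrow> 'a \<Rightarrow> bool) \<Rightarrow> 'a \<Rightarrow> 'a \<Rightarrow> enat" where
  "odist P le x y =
     (if x = y then 0
      else if \<exists>k. comp_path P le k x y then enat (LEAST k. comp_path P le k x y)
      else \<infinity>)"

definition odist_set :: "'a set \<Rightarrow> ('a \<Rightarrow> 'a \<Rightarrow> bool) \<Rightarrow> 'a \<Rightarrow> 'a set \<Rightarrow> enat" where
  "odist_set P le x A = (if A = {} then \<infinity> else (INF y\<in>A. odist P le x y))"

definition order_component :: "'a set \<Rightarrow> ('a \<Rightarrow> 'a \<Rightarrow> bool) \<Rightarrow> 'a \<Rightarrow> 'a set" where
  "order_component P le x = {y\<in>P. odist P le x y < \<infinity>}"

end

theory Submission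
  imports Defs
begin


lemma cp0: "comp_path P le 0 x y \<longleftrightarrow> x = y \<and> x \<in> P"
  unfolding comp_path_def by (rule iffI) (auto intro!: exI[of _ "\<lambda>_. x"])

lemma cp_cons:
  assumes "x \<in> P" "comparable_edge le x w" "comp_path P le k w y"
  shows "comp_path P le (Suc k) x y"
proof -
  obtain f where f: "f 0 = w" "f k = y" "\<forall>i\<le>k. f i \<in> P" "\<forall>i<k. comparable_edge le (f i) (f (Suc i))"
    using assms(3) unfolding comp_path_def by blast
  define g where "g i = (if i = 0 then x else f (i - 1))" for i
  have "g 0 = x" "g (Suc k) = y" using f by (auto simp: g_def)
  moreover have "\<forall>i\<le>Suc k. g i \<in> P"
  proof (intro allI impI)
    fix i assume "i \<le> Suc k" then show "g i \<in> P" using f assms(1) by (cases i) (auto simp: g_def)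
  qed
  moreover have "\<forall>i<Suc k. comparable_edge le (g i) (g (Suc i))"
  proof (intro allI impI)
    fix i assume "i < Suc k"
    then show "comparable_edge le (g i) (g (Suc i))"
      using f assms(2) by (cases i) (auto simp: g_def)
  qed
  ultimately show ?thesis unfolding comp_path_def by blast
qed

lemma odist_le:
  assumes "x \<in> P"
  shows "odist P le x y \<le> enat n \<longleftrightarrow> (\<exists>k\<le>n. comp_path P le k x y)"
proof (cases "x = y")
  case True then show ?thesis using assms by (auto simp: odist_def cp0 zero_enat_def intro!: exI[of _ 0])
next
  case F: False
  show ?thesis
  proof (cases "\<exists>k. comp_path P le k x y")
    case True
    then have "odist P le x y = enat (LEAST k. comp_path P le k x y)" using F by (simp add: odist_def)
    moreover have "comp_path P le (LEAST k. comp_path P le k x y) x y" using True by (metis LeastI)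
    ultimately show ?thesis by (auto intro: Least_le order_trans)
  next
    case False then show ?thesis using F by (simp add: odist_def)
  qed
qed

lemma odist_fin:
  assumes "x \<in> P"
  shows "odist P le x y < \<infinity> \<longleftrightarrow> (\<exists>k. comp_path P le k x y)"
  using assms by (auto simp: odist_def cp0 zero_enat_def intro!: exI[of _ 0])

lemma INF_in_enat:
  assumes "A \<noteq> {}" shows "(INF y\<in>A. (f y :: enat)) \<in> f ` A"
  using assms unfolding Inf_enat_def by (auto intro: LeastI)

lemma odist_set_le:
  assumes "x \<in> P"
  shows "odist_set P le x A \<le> enat n \<longleftrightarrow> (\<exists>y\<in>A. \<exists>k\<le>n. comp_path P le k x y)"
proof (cases "A = {}")
  case True then show ?thesis by (simp add: odist_set_def)
next
  case False
  obtain y0 where y0: "y0 \<in> A" "(INF y\<in>A. odist P le x y) = odist P le x y0"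
    using INF_in_enat[OF False, of "odist P le x"] by auto
  show ?thesis
  proof
    assume "odist_set P le x A \<le> enat n"
    then show "\<exists>y\<in>A. \<exists>k\<le>n. comp_path P le k x y" using y0 False odist_le[OF assms]
      by (auto simp: odist_set_def)
  next
    assume "\<exists>y\<in>A. \<exists>k\<le>n. comp_path P le k x y"
    then obtain y where "y \<in> A" "odist P le x y \<le> enat n" using odist_le[OF assms] by blast
    then show "odist_set P le x A \<le> enat n" using False
      by (auto simp: odist_set_def intro: INF_lower2)
  qed
qed

lemma odist_set_inf:
  assumes "x \<in> P"
  shows "odist_set P le x A = \<infinity> \<longleftrightarrow> (\<forall>y\<in>A. \<forall>k. \<not> comp_path P le k x y)"
proof -
  have "odist_set P le x A = \<infinity> \<longleftrightarrow> (\<forall>n. \<not> odist_set P le x A \<le> enat n)"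
    by (cases "odist_set P le x A") auto
  also have "\<dots> \<longleftrightarrow> (\<forall>y\<in>A. \<forall>k. \<not> comp_path P le k x y)"
    using odist_set_le[OF assms] by blast
  finally show ?thesis .
qed


locale hs =
  fixes P :: "'a set" and le :: "'a \<Rightarrow> 'a \<Rightarrow> bool" and z :: "'a \<Rightarrow> 'a" and X :: "'a set"
  assumes ht: "height_le_1 P le"
    and po_refl: "\<And>x. x \<in> P \<Longrightarrow> le x x"
    and zP: "\<And>x. x \<in> P \<Longrightarrow> z x \<in> P"
    and zrev: "\<And>x y. x \<in> P \<Longrightarrow> y \<in> P \<Longrightarrow> le x y \<Longrightarrow> le (z y) (z x)"
    and zinv: "\<And>x. x \<in> P \<Longrightarrow> z (z x) = x"
    and Xdec: "decreasing P le X"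
begin

lemma cp_zeta:
  assumes "comp_path P le k x y" shows "comp_path P le k (z x) (z y)"
proof -
  obtain f where f: "f 0 = x" "f k = y" "\<forall>i\<le>k. f i \<in> P" "\<forall>i<k. comparable_edge le (f i) (f (Suc i))"
    using assms unfolding comp_path_def by blast
  have "\<forall>i<k. comparable_edge le (z (f i)) (z (f (Suc i)))"
  proof (intro allI impI)
    fix i assume i: "i < k"
    then have P: "f i \<in> P" "f (Suc i) \<in> P" using f by auto
    have "comparable_edge le (f i) (f (Suc i))" using f i by auto
    then show "comparable_edge le (z (f i)) (z (f (Suc i)))"
      unfolding comparable_edge_def using P zrev zinv by metis
  qed
  then show ?thesis unfolding comp_path_def using f zP by (auto intro!: exI[of _ "z \<circ> f"])
qed

lemma cp_zeta_iff:
  assumes "x \<in> P" "y \<in> P" shows "comp_path P le k (z x) y \<longleftrightarrow> comp_path P le k x (z y)"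
  using cp_zeta[of k "z x" y] cp_zeta[of k x "z y"] zinv assms by auto

lemma alt:
  assumes f: "\<forall>i\<le>k. f i \<in> P" "\<forall>i<k. comparable_edge le (f i) (f (Suc i))"
    and le01: "le (f 0) (f 1)"
  shows "i < k \<Longrightarrow> (even i \<longrightarrow> le (f i) (f (Suc i))) \<and> (odd i \<longrightarrow> le (f (Suc i)) (f i))"
proof (induction i)
  case 0 then show ?case using le01 by simp
next
  case (Suc i)
  then have IH: "(even i \<longrightarrow> le (f i) (f (Suc i))) \<and> (odd i \<longrightarrow> le (f (Suc i)) (f i))" by simp
  have e1: "comparable_edge le (f i) (f (Suc i))" and e2: "comparable_edge le (f (Suc i)) (f (Suc (Suc i)))"
    using f Suc.prems by auto
  have P: "f i \<in> P" "f (Suc i) \<in> P" "f (Suc (Suc i)) \<in> P" using f Suc.prems by auto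
  show ?case
  proof (cases "even i")
    case True
    then have l: "le (f i) (f (Suc i))" using IH by simp
    have "\<not> le (f (Suc i)) (f (Suc (Suc i)))"
    proof
      assume h: "le (f (Suc i)) (f (Suc (Suc i)))"
      have "\<exists>x\<in>P. \<exists>y\<in>P. \<exists>w\<in>P. le x y \<and> x \<noteq> y \<and> le y w \<and> y \<noteq> w"
        using h l e1 e2 P unfolding comparable_edge_def by metis
      then show False using ht unfolding height_le_1_def by blast
    qed
    then show ?thesis using True e2 unfolding comparable_edge_def by auto
  next
    case False
    then have l: "le (f (Suc i)) (f i)" using IH by simp
    have "\<not> le (f (Suc (Suc i))) (f (Suc i))"
    proof
      assume h: "le (f (Suc (Suc i))) (f (Suc i))"
      have "\<exists>x\<in>P. \<exists>y\<in>P. \<exists>w\<in>P. le x y \<and> x \<noteq> y \<and> le y w \<and> y \<noteq> w"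
        using h l e1 e2 P unfolding comparable_edge_def by metis
      then show False using ht unfolding height_le_1_def by blast
    qed
    then show ?thesis using False e2 unfolding comparable_edge_def by auto
  qed
qed

definition B :: "nat \<Rightarrow> 'a set" where
  "B n = (if even n then P - X else z ` (P - X))"

lemma B_sub: "B n \<subseteq> P" unfolding B_def using zP by auto

lemma B_Suc: "B (Suc n) = z ` B n"
proof -
  have "z ` z ` (P - X) = P - X" using zinv by (force simp: image_image)
  then show ?thesis unfolding B_def by auto
qed

lemma B_even_inc: "even n \<Longrightarrow> y \<in> B n \<Longrightarrow> w \<in> P \<Longrightarrow> le y w \<Longrightarrow> w \<in> B n"
  using Xdec unfolding B_def decreasing_def by auto

lemma B_odd_dec: "odd n \<Longrightarrow> y \<in> B n \<Longrightarrow> w \<in> P \<Longrightarrow> le w y \<Longrightarrow> w \<in> B n"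
proof -
  assume n: "odd n" and y: "y \<in> B n" and w: "w \<in> P" and l: "le w y"
  then obtain u where u: "u \<in> P" "u \<notin> X" "y = z u" unfolding B_def by auto
  have "le (z y) (z w)" using zrev l w u zP by auto
  then have "le u (z w)" using zinv u by simp
  then have "z w \<notin> X" using Xdec u zP w unfolding decreasing_def by blast
  then have "z w \<in> P - X" using zP w by auto
  then have "z (z w) \<in> z ` (P - X)" by blast
  then show ?thesis using n zinv w unfolding B_def by simp
qed


lemma XP: "X \<subseteq> P" using Xdec unfolding decreasing_def by auto

lemma main: "prime_star_iter P le z n X = {x\<in>P. \<forall>y\<in>B n. \<forall>k\<le>n. \<not> comp_path P le k x y}"
proof (induction n)
  case 0 show ?case using XP by (auto simp: B_def cp0)
next
  case (Suc n)
  define S where "S = prime_star_iter P le z n X"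
  have SP: "S \<subseteq> P" using Suc.IH S_def by auto
  have zS: "w \<in> z ` S \<longleftrightarrow> (\<forall>y\<in>B (Suc n). \<forall>k\<le>n. \<not> comp_path P le k w y)" if w: "w \<in> P" for w
  proof -
    have "w \<in> z ` S \<longleftrightarrow> z w \<in> S"
    proof
      assume "w \<in> z ` S" then obtain x where "x \<in> S" "w = z x" by auto
      then show "z w \<in> S" using SP zinv by auto
    next
      assume "z w \<in> S" then show "w \<in> z ` S" using zinv[OF w] by (metis imageI)
    qed
    also have "\<dots> \<longleftrightarrow> (\<forall>y\<in>B n. \<forall>k\<le>n. \<not> comp_path P le k (z w) y)"
      using Suc.IH zP[OF w] unfolding S_def by auto
    also have "\<dots> \<longleftrightarrow> (\<forall>y\<in>B n. \<forall>k\<le>n. \<not> comp_path P le k w (z y))"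
      using cp_zeta_iff[OF w] B_sub by blast
    also have "\<dots> \<longleftrightarrow> (\<forall>y\<in>B (Suc n). \<forall>k\<le>n. \<not> comp_path P le k w y)"
      unfolding B_Suc by blast
    finally show ?thesis .
  qed
  have mem: "x \<in> prime_star_iter P le z (Suc n) X \<longleftrightarrow> x \<in> P \<and> (\<forall>w\<in>P. le w x \<longrightarrow> w \<in> z ` S)" for x
    unfolding S_def by (auto simp: pstar_def pprime_def upset_def)
  show ?case
  proof (rule set_eqI)
    fix x
    show "x \<in> prime_star_iter P le z (Suc n) X \<longleftrightarrow>
          x \<in> {x\<in>P. \<forall>y\<in>B (Suc n). \<forall>k\<le>Suc n. \<not> comp_path P le k x y}"
    proof
      assume "x \<in> prime_star_iter P le z (Suc n) X"
      then have xP: "x \<in> P" and H: "\<And>w. w \<in> P \<Longrightarrow> le w x \<Longrightarrow> (\<forall>y\<in>B (Suc n). \<forall>k\<le>n. \<not> comp_path P le k w y)"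
        using mem zS by auto
      have "\<not> comp_path P le k x y" if y: "y \<in> B (Suc n)" and k: "k \<le> Suc n" for y k
      proof
        assume p: "comp_path P le k x y"
        define m where "m = (LEAST m. \<exists>y\<in>B (Suc n). comp_path P le m x y)"
        have ex: "\<exists>y\<in>B (Suc n). comp_path P le m x y" unfolding m_def
          using p y by (intro LeastI[of "\<lambda>m. \<exists>y\<in>B (Suc n). comp_path P le m x y" k]) blast
        have mk: "m \<le> k" unfolding m_def using p y by (intro Least_le) blast
        have mmin: "\<And>j y'. y' \<in> B (Suc n) \<Longrightarrow> comp_path P le j x y' \<Longrightarrow> m \<le> j"
          unfolding m_def by (intro Least_le) blast
        obtain y0 where y0: "y0 \<in> B (Suc n)" "comp_path P le m x y0" using ex by blast
        obtain f where f: "f 0 = x" "f m = y0" "\<forall>i\<le>m. f i \<in> P" "\<forall>i<m. comparable_edge le (f i) (f (Suc i))"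
          using y0(2) unfolding comp_path_def by blast
        have selfx: "\<forall>y\<in>B (Suc n). \<forall>k\<le>n. \<not> comp_path P le k x y"
          using H[OF xP] po_refl xP by blast
        show False
        proof (cases "m = 0")
          case True then show ?thesis using y0 selfx by auto
        next
          case m0: False
          have e0: "comparable_edge le (f 0) (f 1)" using f m0 by auto
          have tail: "comp_path P le (m - 1) (f 1) y0"
            unfolding comp_path_def using f m0
            by (intro exI[of _ "\<lambda>i. f (Suc i)"]) auto
          show False
          proof (cases "le (f 1) x")
            case True
            then show False using H[of "f 1"] f tail y0 mk k m0 by auto
          next
            case False
            then have le01: "le (f 0) (f 1)" using e0 f by (auto simp: comparable_edge_def)
            have A: "(even (m-1) \<longrightarrow> le (f (m-1)) (f m)) \<and> (odd (m-1) \<longrightarrow> le (f m) (f (m-1)))"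
              using alt[OF f(3) f(4) le01, of "m-1"] m0 by simp
            have pre: "comp_path P le (m-1) x (f (m-1))"
              unfolding comp_path_def using f by (intro exI[of _ f]) auto
            have nB: "f (m-1) \<notin> B (Suc n)" using mmin[OF _ pre] m0 by fastforce
            have fm1P: "f (m-1) \<in> P" using f by auto
            have par: "even (m - 1) \<longleftrightarrow> even (Suc n)"
            proof (cases "even (Suc n)")
              case True
              then show ?thesis using A nB B_even_inc[OF True y0(1) fm1P] f(2) m0 by auto
            next
              case False
              then show ?thesis using A nB B_odd_dec[OF False y0(1) fm1P] f(2) m0 by auto
            qed
            have "m \<noteq> Suc n" using par m0 by auto
            then have "m \<le> n" using mk k by auto
            then show False using selfx y0 by auto
          qed
        qed
      qed
      then show "x \<in> {x\<in>P. \<forall>y\<in>B (Suc n). \<forall>k\<le>Suc n. \<not> comp_path P le k x y}" using xP by auto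
    next
      assume "x \<in> {x\<in>P. \<forall>y\<in>B (Suc n). \<forall>k\<le>Suc n. \<not> comp_path P le k x y}"
      then have xP: "x \<in> P" and H: "\<forall>y\<in>B (Suc n). \<forall>k\<le>Suc n. \<not> comp_path P le k x y" by auto
      have "w \<in> z ` S" if w: "w \<in> P" "le w x" for w
      proof -
        have "\<not> comp_path P le k w y" if "y \<in> B (Suc n)" "k \<le> n" for y k
        proof
          assume p: "comp_path P le k w y"
          show False
          proof (cases "w = x")
            case True then show False using H p that by auto
          next
            case False
            then have "comparable_edge le x w" using w by (auto simp: comparable_edge_def)
            then have "comp_path P le (Suc k) x y" using cp_cons[OF xP _ p] by blast
            then show False using H that by auto
          qed
        qed
        then show ?thesis using zS[OF w(1)] by blast
      qed
      then show "x \<in> prime_star_iter P le z (Suc n) X" using mem xP by blast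
    qed
  qed
qed
end


theorem lemma3p2:
  fixes T :: "'a topology" and le :: "'a \<Rightarrow> 'a \<Rightarrow> bool" and zeta :: "'a \<Rightarrow> 'a"
    and X :: "'a set"
  assumes "pm_space T le zeta"
    and "height_le_1 (topspace T) le"
    and "clopenin T X" and "decreasing (topspace T) le X"
  shows "(\<forall>n::nat.
            prime_star_iter (topspace T) le zeta n X =
              (if even n
               then {x\<in>topspace T. odist_set (topspace T) le x (topspace T - X) > enat n}
               else {x\<in>topspace T. odist_set (topspace T) le x (zeta ` (topspace T - X)) > enat n}))
       \<and> (\<forall>x\<in>topspace T.
            (odist_set (topspace T) le x (topspace T - X) = \<infinity>
               \<longleftrightarrow> order_component (topspace T) le x \<subseteq> X)
          \<and> (odist_set (topspace T) le x (zeta ` (topspace T - X)) = \<infinity>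
               \<longleftrightarrow> zeta ` order_component (topspace T) le x \<subseteq> X))"
  proof -
  let ?P = "topspace T"
  have pm: "pm_space T le zeta" by fact
  then have pr: "priestley_space T le" and cm: "continuous_map T T zeta"
    and zr: "\<forall>x\<in>?P. \<forall>y\<in>?P. le x y \<longrightarrow> le (zeta y) (zeta x)"
    and zi: "\<forall>x\<in>?P. zeta (zeta x) = x"
    unfolding pm_space_def by auto
  have rf: "\<And>x. x \<in> ?P \<Longrightarrow> le x x"
    using pr unfolding priestley_space_def partial_order_on_set_def by auto
  have zP: "\<And>x. x \<in> ?P \<Longrightarrow> zeta x \<in> ?P"
    using continuous_map_image_subset_topspace[OF cm] by blast
  interpret hs ?P le zeta X
    using assms(2) assms(4) rf zP zr zi by unfold_locales auto
  have gt: "enat n < odist_set ?P le x A \<longleftrightarrow> (\<forall>y\<in>A. \<forall>k\<le>n. \<not> comp_path ?P le k x y)"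
    if "x \<in> ?P" for x n A
    using odist_set_le[OF that, where n=n and A=A and le=le] by (simp add: not_le[symmetric])
  have part1: "prime_star_iter ?P le zeta n X =
              (if even n
               then {x\<in>?P. odist_set ?P le x (?P - X) > enat n}
               else {x\<in>?P. odist_set ?P le x (zeta ` (?P - X)) > enat n})" for n
  proof (cases "even n")
    case True
    then show ?thesis unfolding main B_def using gt by (simp cong: Collect_cong conj_cong)
  next
    case False
    then show ?thesis unfolding main B_def using gt by (simp cong: Collect_cong conj_cong)
  qed
  have part2: "(odist_set ?P le x (?P - X) = \<infinity> \<longleftrightarrow> order_component ?P le x \<subseteq> X)
          \<and> (odist_set ?P le x (zeta ` (?P - X)) = \<infinity> \<longleftrightarrow> zeta ` order_component ?P le x \<subseteq> X)"
    if x: "x \<in> ?P" for x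
  proof
    show "odist_set ?P le x (?P - X) = \<infinity> \<longleftrightarrow> order_component ?P le x \<subseteq> X"
      unfolding odist_set_inf[OF x] order_component_def odist_fin[OF x] by blast
  next
    have "odist_set ?P le x (zeta ` (?P - X)) = \<infinity> \<longleftrightarrow> (\<forall>y\<in>?P - X. \<forall>k. \<not> comp_path ?P le k x (zeta y))"
      unfolding odist_set_inf[OF x] by blast
    also have "\<dots> \<longleftrightarrow> zeta ` order_component ?P le x \<subseteq> X"
    proof
      assume H: "\<forall>y\<in>?P - X. \<forall>k. \<not> comp_path ?P le k x (zeta y)"
      show "zeta ` order_component ?P le x \<subseteq> X"
      proof
        fix v assume "v \<in> zeta ` order_component ?P le x"
        then obtain w k where w: "w \<in> ?P" "comp_path ?P le k x w" "v = zeta w"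
          unfolding order_component_def odist_fin[OF x] by blast
        show "v \<in> X"
        proof (rule ccontr)
          assume "v \<notin> X"
          then have "v \<in> ?P - X" using zP w by auto
          moreover have "zeta v = w" using zi w by auto
          ultimately show False using H w by metis
        qed
      qed
    next
      assume H: "zeta ` order_component ?P le x \<subseteq> X"
      show "\<forall>y\<in>?P - X. \<forall>k. \<not> comp_path ?P le k x (zeta y)"
      proof (intro ballI allI notI)
        fix y k assume y: "y \<in> ?P - X" and p: "comp_path ?P le k x (zeta y)"
        have "zeta y \<in> order_component ?P le x"
          unfolding order_component_def odist_fin[OF x] using p zP y by blast
        then have "zeta (zeta y) \<in> X" using H by blast
        then show False using zi y by auto
      qed
    qed
    finally show "odist_set ?P le x (zeta ` (?P - X)) = \<infinity> \<longleftrightarrow> zeta ` order_component ?P le x \<subseteq> X" .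
  qed
  show ?thesis using part1 part2 by blast
qed

end
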